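(* Fix $C<1$. For every $\epsilon>0$ there are positive constants $D$ and $N$ such that \[ \mathbb{P}(\#\mathcal{E}_i\ge\epsilon n)\le D\frac{(\log n)^3}{n^2} \] for all $n\ge N$ and all $1\le i\le n$.
   Context: Let $C>0$ be a constant and $(\alpha_n)_{n\ge1}$ a sequence of nonnegative reals with $\alpha_n\to0$. For each $n$, consider the complete graph $K_n$ on vertex set $\{1,\dots,n\}$; each edge $e$ of $K_n$ is independently open with probability $p_n(e)$ and closed otherwise, where $\frac{C-\alpha_n}{n}\le p_n(e)\le\frac{C+\alpha_n}{n}$ for every edge $e$. Let $G$ be the resulting random graph of open edges, with probability measure $\mathbb{P}$. For a vertex $i$, $\mathcal{E}_i$ denotes the open component of $G$ containing $i$ (the set of vertices joined to $i$ by a path of open edges, together with $i$ itself), and $\#\mathcal{E}_i$ its number of vertices. $\log$ is the natural logarithm. *)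

theory Defs
  imports Complex_Main
begin

definition Kn_edges :: "nat \<Rightarrow> nat set set" where
  "Kn_edges n = {e. \<exists>i j. e = {i, j} \<and> i \<noteq> j \<and> i \<in> {1..n} \<and> j \<in> {1..n}}"

text \<open>Probability of a given set G of open edges when each edge e of K_n is
independently open with probability p e.\<close>
definition graph_prob :: "nat \<Rightarrow> (nat set \<Rightarrow> real) \<Rightarrow> nat set set \<Rightarrow> real" where
  "graph_prob n p G = (\<Prod>e\<in>Kn_edges n. if e \<in> G then p e else 1 - p e)"

definition rg_prob :: "nat \<Rightarrow> (nat set \<Rightarrow> real) \<Rightarrow> (nat set set \<Rightarrow> bool) \<Rightarrow> real" where
  "rg_prob n p A = (\<Sum>G\<in>{G. G \<subseteq> Kn_edges n \<and> A G}. graph_prob n p G)"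

definition open_comp :: "nat \<Rightarrow> nat set set \<Rightarrow> nat \<Rightarrow> nat set" where
  "open_comp n G i = {j \<in> {1..n}. (i, j) \<in> {(a, b). {a, b} \<in> G \<and> a \<noteq> b}\<^sup>*}"

end

theory Submission
  imports Defs
begin


definition W :: "'e set \<Rightarrow> ('e \<Rightarrow> real) \<Rightarrow> 'e set \<Rightarrow> real" where
  "W E p G = (\<Prod>e\<in>E. if e \<in> G then p e else 1 - p e)"
definition Ex :: "'e set \<Rightarrow> ('e \<Rightarrow> real) \<Rightarrow> ('e set \<Rightarrow> real) \<Rightarrow> real" where
  "Ex E p f = (\<Sum>G\<in>Pow E. W E p G * f G)"

lemma Ex_split:
  assumes fin: "finite E" and sub: "E1 \<subseteq> E"
  shows "Ex E p f = Ex E1 p (\<lambda>G1. Ex (E - E1) p (\<lambda>G2. f (G1 \<union> G2)))"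
proof -
  let ?h = "\<lambda>(G1,G2). G1 \<union> (G2::'a set)"
  have inj: "inj_on ?h (Pow E1 \<times> Pow (E - E1))"
  proof (rule inj_onI, clarsimp)
    fix a b c d assume "a \<subseteq> E1" "b \<subseteq> E - E1" "c \<subseteq> E1" "d \<subseteq> E - E1" "a \<union> b = c \<union> d"
    then show "a = c \<and> b = d" by blast
  qed
  have img: "?h ` (Pow E1 \<times> Pow (E - E1)) = Pow E"
  proof
    show "?h ` (Pow E1 \<times> Pow (E - E1)) \<subseteq> Pow E" using sub by auto
    show "Pow E \<subseteq> ?h ` (Pow E1 \<times> Pow (E - E1))"
    proof
      fix G assume "G \<in> Pow E"
      then have "(G \<inter> E1, G - E1) \<in> Pow E1 \<times> Pow (E - E1)" "G = ?h (G \<inter> E1, G - E1)" by auto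
      then show "G \<in> ?h ` (Pow E1 \<times> Pow (E - E1))" by blast
    qed
  qed
  have Wsplit: "W E p (G1 \<union> G2) = W E1 p G1 * W (E - E1) p G2"
    if "G1 \<subseteq> E1" "G2 \<subseteq> E - E1" for G1 G2
  proof -
    have "W E p (G1 \<union> G2) = (\<Prod>e\<in>E - E1. if e \<in> G1 \<union> G2 then p e else 1 - p e) *
        (\<Prod>e\<in>E1. if e \<in> G1 \<union> G2 then p e else 1 - p e)"
      unfolding W_def by (rule prod.subset_diff[OF sub fin])
    also have "(\<Prod>e\<in>E - E1. if e \<in> G1 \<union> G2 then p e else 1 - p e) = W (E - E1) p G2"
      unfolding W_def by (rule prod.cong) (use that in auto)
    also have "(\<Prod>e\<in>E1. if e \<in> G1 \<union> G2 then p e else 1 - p e) = W E1 p G1"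
      unfolding W_def by (rule prod.cong) (use that in auto)
    finally show ?thesis by simp
  qed
  have "Ex E p f = (\<Sum>G\<in>?h ` (Pow E1 \<times> Pow (E - E1)). W E p G * f G)"
    unfolding Ex_def img ..
  also have "\<dots> = (\<Sum>x\<in>Pow E1 \<times> Pow (E - E1). W E p (?h x) * f (?h x))"
    by (subst sum.reindex[OF inj]) (simp add: comp_def)
  also have "\<dots> = (\<Sum>(G1,G2)\<in>Pow E1 \<times> Pow (E - E1). W E1 p G1 * (W (E - E1) p G2 * f (G1 \<union> G2)))"
    by (rule sum.cong) (auto simp: Wsplit)
  also have "\<dots> = (\<Sum>G1\<in>Pow E1. \<Sum>G2\<in>Pow (E - E1). W E1 p G1 * (W (E - E1) p G2 * f (G1 \<union> G2)))"
    by (rule sum.cartesian_product[symmetric])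
  also have "\<dots> = Ex E1 p (\<lambda>G1. Ex (E - E1) p (\<lambda>G2. f (G1 \<union> G2)))"
    unfolding Ex_def by (simp add: sum_distrib_left)
  finally show ?thesis .
qed

lemma Ex_cong: "(\<And>G. G \<subseteq> E \<Longrightarrow> f G = g G) \<Longrightarrow> Ex E p f = Ex E p g"
  unfolding Ex_def by (rule sum.cong) auto

lemma Ex_cmult: "Ex E p (\<lambda>G. c * f G) = c * Ex E p f"
  unfolding Ex_def by (simp add: sum_distrib_left algebra_simps)

lemma W_nonneg: "(\<And>e. e \<in> E \<Longrightarrow> 0 \<le> p e \<and> p e \<le> 1) \<Longrightarrow> 0 \<le> W E p G"
  unfolding W_def by (rule prod_nonneg) auto

lemma Ex_mono:
  assumes "\<And>e. e \<in> E \<Longrightarrow> 0 \<le> p e \<and> p e \<le> 1" "\<And>G. G \<subseteq> E \<Longrightarrow> f G \<le> g G"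
  shows "Ex E p f \<le> Ex E p g"
  unfolding Ex_def by (rule sum_mono) (use assms W_nonneg[of E p] in \<open>auto intro: mult_left_mono\<close>)

lemma Ex_single: "Ex {x} p h = (1 - p x) * h {} + p x * h {x}"
proof -
  have "Pow {x} = {{}, {x}}" by blast
  then show ?thesis by (simp add: Ex_def W_def)
qed

lemma Ex_prod:
  assumes "finite E"
  shows "Ex E p (\<lambda>G. \<Prod>e\<in>G. g e) = (\<Prod>e\<in>E. 1 - p e + p e * g e)"
  using assms
proof (induction E rule: finite_induct)
  case empty
  then show ?case by (simp add: Ex_def W_def)
next
  case (insert x F)
  have "Ex (insert x F) p (\<lambda>G. \<Prod>e\<in>G. g e) =
      Ex {x} p (\<lambda>G1. Ex (insert x F - {x}) p (\<lambda>G2. \<Prod>e\<in>G1 \<union> G2. g e))"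
    by (rule Ex_split) (use insert in auto)
  also have "insert x F - {x} = F" using insert by auto
  also have "Ex {x} p (\<lambda>G1. Ex F p (\<lambda>G2. \<Prod>e\<in>G1 \<union> G2. g e)) =
      Ex {x} p (\<lambda>G1. (\<Prod>e\<in>G1. g e) * Ex F p (\<lambda>G2. \<Prod>e\<in>G2. g e))"
  proof (rule Ex_cong)
    fix G1 assume G1: "G1 \<subseteq> {x}"
    have "Ex F p (\<lambda>G2. \<Prod>e\<in>G1 \<union> G2. g e) = Ex F p (\<lambda>G2. (\<Prod>e\<in>G1. g e) * (\<Prod>e\<in>G2. g e))"
    proof (rule Ex_cong)
      fix G2 assume "G2 \<subseteq> F"
      then have "finite G1" "finite G2" "G1 \<inter> G2 = {}" using G1 insert finite_subset by auto
      then show "(\<Prod>e\<in>G1 \<union> G2. g e) = (\<Prod>e\<in>G1. g e) * (\<Prod>e\<in>G2. g e)"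
        by (rule prod.union_disjoint)
    qed
    then show "Ex F p (\<lambda>G2. \<Prod>e\<in>G1 \<union> G2. g e) = (\<Prod>e\<in>G1. g e) * Ex F p (\<lambda>G2. \<Prod>e\<in>G2. g e)"
      by (simp add: Ex_cmult)
  qed
  also have "\<dots> = (1 - p x + p x * g x) * Ex F p (\<lambda>G2. \<Prod>e\<in>G2. g e)"
    by (simp add: Ex_single algebra_simps)
  finally show ?case using insert by simp
qed

lemma Ex_const: "finite E \<Longrightarrow> Ex E p (\<lambda>G. c) = c"
  using Ex_prod[of E p "\<lambda>_. 1"] Ex_cmult[of E p c "\<lambda>_. 1"] by simp

primrec explore :: "nat \<Rightarrow> nat set \<Rightarrow> nat set \<Rightarrow> nat set set \<Rightarrow> nat set" where
  "explore 0 V A G = {}"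
| "explore (Suc m) V A G = (if A \<inter> V = {} then {} else
    (let a = (SOME a. a \<in> A \<inter> V) in
      insert a (explore m (V - {a}) ((A \<inter> V - {a}) \<union> {v \<in> V - {a}. {a, v} \<in> G}) G)))"

lemma explore_SucE:
  assumes "A \<inter> V \<noteq> {}"
  obtains a where "a \<in> A \<inter> V" "\<And>G. explore (Suc m) V A G =
     insert a (explore m (V - {a}) ((A \<inter> V - {a}) \<union> {v \<in> V - {a}. {a, v} \<in> G}) G)"
proof -
  define a where "a = (SOME a. a \<in> A \<inter> V)"
  have "a \<in> A \<inter> V" unfolding a_def using assms by (metis ex_in_conv someI_ex)
  moreover have "\<And>G. explore (Suc m) V A G =
     insert a (explore m (V - {a}) ((A \<inter> V - {a}) \<union> {v \<in> V - {a}. {a, v} \<in> G}) G)"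
    by (simp only: explore.simps if_not_P[OF assms] Let_def a_def)
  ultimately show thesis using that by blast
qed

lemma explore_sub: "explore m V A G \<subseteq> V"
proof (induction m arbitrary: V A)
  case 0 then show ?case by simp
next
  case (Suc m)
  show ?case
  proof (cases "A \<inter> V = {}")
    case False
    then obtain a where a: "a \<in> A \<inter> V" and e: "\<And>G. explore (Suc m) V A G =
     insert a (explore m (V - {a}) ((A \<inter> V - {a}) \<union> {v \<in> V - {a}. {a, v} \<in> G}) G)"
      using explore_SucE[OF False, where m=m] by blast
    show ?thesis unfolding e using Suc.IH[of "V - {a}"] a by blast
  qed simp
qed

lemma explore_closed:
  assumes "finite V" "card V \<le> m"
  shows "A \<inter> V \<subseteq> explore m V A G \<and>
    (\<forall>x\<in>explore m V A G. \<forall>y\<in>V. {x, y} \<in> G \<and> x \<noteq> y \<longrightarrow> y \<in> explore m V A G)"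
  using assms
proof (induction m arbitrary: V A)
  case 0 then show ?case by simp
next
  case (Suc m)
  show ?case
  proof (cases "A \<inter> V = {}")
    case False
    then obtain a where a: "a \<in> A \<inter> V" and e: "\<And>G. explore (Suc m) V A G =
     insert a (explore m (V - {a}) ((A \<inter> V - {a}) \<union> {v \<in> V - {a}. {a, v} \<in> G}) G)"
      using explore_SucE[OF False, where m=m] by blast
    define A' where "A' = (A \<inter> V - {a}) \<union> {v \<in> V - {a}. {a, v} \<in> G}"
    define X' where "X' = explore m (V - {a}) A' G"
    have X: "explore (Suc m) V A G = insert a X'"
      unfolding e A'_def X'_def ..
    have "card (V - {a}) \<le> m" using Suc.prems a by auto
    then have IH: "A' \<inter> (V - {a}) \<subseteq> X'"
      "\<forall>x\<in>X'. \<forall>y\<in>V - {a}. {x, y} \<in> G \<and> x \<noteq> y \<longrightarrow> y \<in> X'"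
      using Suc.IH[of "V - {a}" A'] Suc.prems unfolding X'_def by auto
    show ?thesis unfolding X
    proof (intro conjI ballI impI)
      show "A \<inter> V \<subseteq> insert a X'" using IH(1) unfolding A'_def by auto
    next
      fix x y assume x: "x \<in> insert a X'" and y: "y \<in> V" and e: "{x, y} \<in> G \<and> x \<noteq> y"
      show "y \<in> insert a X'"
      proof (cases "x = a")
        case True
        then have "y \<in> A' \<inter> (V - {a})" using y e unfolding A'_def by auto
        then show ?thesis using IH(1) by auto
      next
        case False
        then have "x \<in> X'" using x by auto
        then show ?thesis using IH(2) y e by auto
      qed
    qed
  qed simp
qed

lemma explore_cong:
  assumes "\<And>x y. x \<in> V \<Longrightarrow> y \<in> V \<Longrightarrow> ({x, y} \<in> G \<longleftrightarrow> {x, y} \<in> G')"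
  shows "explore m V A G = explore m V A G'"
  using assms
proof (induction m arbitrary: V A)
  case 0 then show ?case by simp
next
  case (Suc m)
  show ?case
  proof (cases "A \<inter> V = {}")
    case False
    then obtain a where a: "a \<in> A \<inter> V" and e: "\<And>G. explore (Suc m) V A G =
     insert a (explore m (V - {a}) ((A \<inter> V - {a}) \<union> {v \<in> V - {a}. {a, v} \<in> G}) G)"
      using explore_SucE[OF False, where m=m] by blast
    have N: "{v \<in> V - {a}. {a, v} \<in> G} = {v \<in> V - {a}. {a, v} \<in> G'}"
      using Suc.prems a by auto
    have "explore m (V - {a}) ((A \<inter> V - {a}) \<union> {v \<in> V - {a}. {a, v} \<in> G'}) G =
          explore m (V - {a}) ((A \<inter> V - {a}) \<union> {v \<in> V - {a}. {a, v} \<in> G'}) G'"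
      by (rule Suc.IH) (use Suc.prems in auto)
    then show ?thesis unfolding e N by simp
  qed simp
qed



lemma main_bound:
  fixes E :: "nat set set"
  assumes "finite E" and "\<forall>e\<in>E. 0 \<le> p e \<and> p e \<le> 1 \<and> p e \<le> q" and q0: "0 \<le> q"
    and z1: "1 \<le> z" and w1: "1 \<le> w" and key: "z * (1 + q * (w - 1)) ^ n \<le> w"
    and "finite V" "card V \<le> m" "card V \<le> n"
  shows "Ex E p (\<lambda>G. z ^ card (explore m V A G)) \<le> w ^ card (A \<inter> V)"
  using assms(1,2,7,8,9)
proof (induction m arbitrary: V A E)
  case 0 then show ?case by (simp add: Ex_const)
next
  case (Suc m)
  note fin = Suc.prems(1) and pE = Suc.prems(2)
  have p01: "\<And>e. e \<in> E \<Longrightarrow> 0 \<le> p e \<and> p e \<le> 1" using pE by auto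
  show ?case
  proof (cases "A \<inter> V = {}")
    case True
    then show ?thesis using fin by (simp add: Ex_const)
  next
    case False
    then obtain a where a: "a \<in> A \<inter> V" and e: "\<And>G. explore (Suc m) V A G =
     insert a (explore m (V - {a}) ((A \<inter> V - {a}) \<union> {v \<in> V - {a}. {a, v} \<in> G}) G)"
      using explore_SucE[OF False, where m=m] by blast
    define V' where "V' = V - {a}"
    define Ea where "Ea = E \<inter> (\<lambda>v. {a, v}) ` V'"
    define A'' where "A'' G1 = (A \<inter> V - {a}) \<union> {v \<in> V'. {a, v} \<in> G1}" for G1
    define c where "c = card (A \<inter> V)"
    define K where "K = (1 + q * (w - 1)) ^ n"
    have finV': "finite V'" using Suc.prems unfolding V'_def by auto
    have cV': "card V' \<le> m" "card V' \<le> n" using Suc.prems a unfolding V'_def by auto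
    have EaE: "Ea \<subseteq> E" unfolding Ea_def by auto
    have c1: "c \<ge> 1" unfolding c_def using False Suc.prems(3) by (simp add: Suc_le_eq card_gt_0_iff)
    have step1: "Ex E p (\<lambda>G. z ^ card (explore (Suc m) V A G)) \<le>
        Ex E p (\<lambda>G. z * z ^ card (explore m V' (A'' G) G))"
    proof (rule Ex_mono[OF p01])
      fix G
      have fX: "finite (explore m V' (A'' G) G)" by (rule finite_subset[OF explore_sub finV'])
      have eq: "explore (Suc m) V A G = insert a (explore m V' (A'' G) G)"
        unfolding e A''_def V'_def by simp
      have "card (explore (Suc m) V A G) \<le> Suc (card (explore m V' (A'' G) G))"
        unfolding eq using fX by (simp add: card_insert_if)
      then have "z ^ card (explore (Suc m) V A G) \<le> z ^ Suc (card (explore m V' (A'' G) G))"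
        by (rule power_increasing[OF _ z1])
      then show "z ^ card (explore (Suc m) V A G) \<le> z * z ^ card (explore m V' (A'' G) G)" by simp
    qed auto
    have step2: "Ex E p (\<lambda>G. z ^ card (explore m V' (A'' G) G)) =
        Ex Ea p (\<lambda>G1. Ex (E - Ea) p (\<lambda>G2. z ^ card (explore m V' (A'' G1) G2)))"
    proof -
      have "Ex E p (\<lambda>G. z ^ card (explore m V' (A'' G) G)) =
        Ex Ea p (\<lambda>G1. Ex (E - Ea) p (\<lambda>G2. z ^ card (explore m V' (A'' (G1 \<union> G2)) (G1 \<union> G2))))"
        by (rule Ex_split[OF fin EaE])
      also have "\<dots> = Ex Ea p (\<lambda>G1. Ex (E - Ea) p (\<lambda>G2. z ^ card (explore m V' (A'' G1) G2)))"
      proof (intro Ex_cong)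
        fix G1 G2 assume G1: "G1 \<subseteq> Ea" and G2: "G2 \<subseteq> E - Ea"
        have "A'' (G1 \<union> G2) = A'' G1"
          unfolding A''_def using G2 unfolding Ea_def by auto
        moreover have "explore m V' (A'' G1) (G1 \<union> G2) = explore m V' (A'' G1) G2"
        proof (rule explore_cong)
          fix x y assume "x \<in> V'" "y \<in> V'"
          then have "{x, y} \<notin> G1" using G1 unfolding Ea_def V'_def by (auto simp: doubleton_eq_iff)
          then show "({x, y} \<in> G1 \<union> G2) = ({x, y} \<in> G2)" by auto
        qed
        ultimately show "z ^ card (explore m V' (A'' (G1 \<union> G2)) (G1 \<union> G2)) =
           z ^ card (explore m V' (A'' G1) G2)" by simp
      qed
      finally show ?thesis .
    qed
    have step3: "Ex Ea p (\<lambda>G1. Ex (E - Ea) p (\<lambda>G2. z ^ card (explore m V' (A'' G1) G2))) \<le>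
        Ex Ea p (\<lambda>G1. w ^ card (A'' G1 \<inter> V'))"
    proof (rule Ex_mono)
      show "\<And>e. e \<in> Ea \<Longrightarrow> 0 \<le> p e \<and> p e \<le> 1" using p01 EaE by auto
      fix G1
      show "Ex (E - Ea) p (\<lambda>G2. z ^ card (explore m V' (A'' G1) G2)) \<le> w ^ card (A'' G1 \<inter> V')"
        by (rule Suc.IH) (use fin pE finV' cV' in auto)
    qed
    have step4: "Ex Ea p (\<lambda>G1. w ^ card (A'' G1 \<inter> V')) \<le>
        Ex Ea p (\<lambda>G1. w ^ (c - 1) * (\<Prod>e\<in>G1. w))"
    proof (rule Ex_mono)
      show "\<And>e. e \<in> Ea \<Longrightarrow> 0 \<le> p e \<and> p e \<le> 1" using p01 EaE by auto
      fix G1 assume G1: "G1 \<subseteq> Ea"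
      have finG1: "finite G1" using G1 EaE fin by (meson finite_subset order_trans)
      define N where "N = {v \<in> V'. {a, v} \<in> G1}"
      have "card N \<le> card G1"
      proof (rule card_inj_on_le[where f = "\<lambda>v. {a, v}"])
        show "inj_on (\<lambda>v. {a, v}) N" unfolding N_def V'_def by (auto simp: inj_on_def doubleton_eq_iff)
        show "(\<lambda>v. {a, v}) ` N \<subseteq> G1" unfolding N_def by auto
      qed (rule finG1)
      moreover have "A'' G1 \<inter> V' \<subseteq> (A \<inter> V - {a}) \<union> N" unfolding A''_def N_def by auto
      moreover have "finite N" "finite (A \<inter> V - {a})" using finV' Suc.prems(3) unfolding N_def by auto
      ultimately have "card (A'' G1 \<inter> V') \<le> card ((A \<inter> V - {a}) \<union> N)"
        by (intro card_mono) auto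
      also have "\<dots> \<le> card (A \<inter> V - {a}) + card N" by (rule card_Un_le)
      finally have "card (A'' G1 \<inter> V') \<le> card (A \<inter> V - {a}) + card N" .
      also have "card (A \<inter> V - {a}) = c - 1" unfolding c_def using a Suc.prems(3) by simp
      finally have "card (A'' G1 \<inter> V') \<le> (c - 1) + card G1" using \<open>card N \<le> card G1\<close> by linarith
      then have "w ^ card (A'' G1 \<inter> V') \<le> w ^ ((c - 1) + card G1)" by (rule power_increasing[OF _ w1])
      then show "w ^ card (A'' G1 \<inter> V') \<le> w ^ (c - 1) * (\<Prod>e\<in>G1. w)" by (simp add: power_add)
    qed
    have finEa: "finite Ea" by (rule finite_subset[OF EaE fin])
    have prodK: "(\<Prod>e\<in>Ea. 1 - p e + p e * w) \<le> K"
    proof -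
      have "(\<Prod>e\<in>Ea. 1 - p e + p e * w) \<le> (\<Prod>e\<in>Ea. 1 + q * (w - 1))"
      proof (rule prod_mono)
        fix e assume "e \<in> Ea"
        then have "0 \<le> p e" "p e \<le> 1" "p e \<le> q" using pE EaE by auto
        moreover have "p e * (w - 1) \<le> q * (w - 1)" by (rule mult_right_mono) (use w1 \<open>p e \<le> q\<close> in auto)
        moreover have "0 \<le> p e * (w - 1)" using w1 \<open>0 \<le> p e\<close> by simp
        moreover have "1 - p e + p e * w = 1 + p e * (w - 1)" by (simp add: algebra_simps)
        ultimately show "0 \<le> 1 - p e + p e * w \<and> 1 - p e + p e * w \<le> 1 + q * (w - 1)"
          by linarith
      qed
      also have "(\<Prod>e\<in>Ea. 1 + q * (w - 1)) = (1 + q * (w - 1)) ^ card Ea" by simp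
      also have "\<dots> \<le> K" unfolding K_def
      proof (rule power_increasing)
        have "card Ea \<le> card ((\<lambda>v. {a, v}) ` V')" unfolding Ea_def
          by (rule card_mono) (use finV' in auto)
        also have "\<dots> \<le> card V'" by (rule card_image_le[OF finV'])
        finally show "card Ea \<le> n" using cV' by linarith
        show "1 \<le> 1 + q * (w - 1)" using q0 w1 by simp
      qed
      finally show ?thesis .
    qed
    have wc0: "0 \<le> w ^ (c - 1)" using w1 by simp
    have step5: "Ex Ea p (\<lambda>G1. w ^ (c - 1) * (\<Prod>e\<in>G1. w)) \<le> w ^ (c - 1) * K"
    proof -
      have "Ex Ea p (\<lambda>G1. w ^ (c - 1) * (\<Prod>e\<in>G1. w)) = w ^ (c - 1) * (\<Prod>e\<in>Ea. 1 - p e + p e * w)"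
        unfolding Ex_cmult Ex_prod[OF finEa] ..
      also have "\<dots> \<le> w ^ (c - 1) * K" by (rule mult_left_mono[OF prodK wc0])
      finally show ?thesis .
    qed
    have "Ex E p (\<lambda>G. z ^ card (explore (Suc m) V A G)) \<le> z * (w ^ (c - 1) * K)"
    proof -
      have "Ex E p (\<lambda>G. z * z ^ card (explore m V' (A'' G) G)) = z * Ex E p (\<lambda>G. z ^ card (explore m V' (A'' G) G))"
        by (rule Ex_cmult)
      also have "\<dots> \<le> z * (w ^ (c - 1) * K)"
      proof (rule mult_left_mono)
        show "0 \<le> z" using z1 by simp
        show "Ex E p (\<lambda>G. z ^ card (explore m V' (A'' G) G)) \<le> w ^ (c - 1) * K"
          unfolding step2 using step3 step4 step5 by linarith
      qed
      finally show ?thesis using step1 by linarith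
    qed
    also have "z * (w ^ (c - 1) * K) = w ^ (c - 1) * (z * K)" by simp
    also have "\<dots> \<le> w ^ (c - 1) * w" using key unfolding K_def by (rule mult_left_mono[OF _ wc0])
    also have "\<dots> = w ^ Suc (c - 1)" by (simp only: power_Suc2)
    also have "Suc (c - 1) = c" using c1 by simp
    finally show ?thesis unfolding c_def .
  qed
qed



lemma Kn_fin: "finite (Kn_edges n)"
proof -
  have "Kn_edges n \<subseteq> Pow {1..n}" unfolding Kn_edges_def by auto
  then show ?thesis by (rule finite_subset) simp
qed

lemma rg_prob_Ex: "rg_prob n p P = Ex (Kn_edges n) p (\<lambda>G. if P G then 1 else 0)"
proof -
  have "{G. G \<subseteq> Kn_edges n \<and> P G} = {G \<in> Pow (Kn_edges n). P G}" by auto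
  then have "rg_prob n p P = (\<Sum>G\<in>Pow (Kn_edges n). if P G then graph_prob n p G else 0)"
    unfolding rg_prob_def by (simp only: sum.inter_filter[OF finite_Pow_iff[THEN iffD2, OF Kn_fin]])
  also have "\<dots> = (\<Sum>G\<in>Pow (Kn_edges n). W (Kn_edges n) p G * (if P G then 1 else 0))"
    by (rule sum.cong) (auto simp: graph_prob_def W_def)
  finally show ?thesis unfolding Ex_def .
qed

lemma oc_sub:
  assumes G: "G \<subseteq> Kn_edges n" and i: "i \<in> {1..n}"
  shows "open_comp n G i \<subseteq> explore n {1..n} {i} G"
proof
  fix j assume "j \<in> open_comp n G i"
  then have rt: "(i, j) \<in> {(a, b). {a, b} \<in> G \<and> a \<noteq> b}\<^sup>*" unfolding open_comp_def by auto
  define X where "X = explore n {1..n} {i} G"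
  have cl: "{i} \<inter> {1..n} \<subseteq> X \<and> (\<forall>x\<in>X. \<forall>y\<in>{1..n}. {x, y} \<in> G \<and> x \<noteq> y \<longrightarrow> y \<in> X)"
    unfolding X_def by (rule explore_closed) auto
  from rt show "j \<in> X"
  proof (induction rule: rtrancl_induct)
    case base then show ?case using cl i by auto
  next
    case (step y z)
    then have yz: "{y, z} \<in> G" "y \<noteq> z" by auto
    then have "{y, z} \<in> Kn_edges n" using G by auto
    then obtain a b where ab: "{y, z} = {a, b}" "a \<in> {1..n}" "b \<in> {1..n}" unfolding Kn_edges_def by auto
    then have "z \<in> {1..n}" by (auto simp: doubleton_eq_iff)
    then show ?case using cl step.IH yz by blast
  qed
qed



lemma exp_cube: "0 \<le> t \<Longrightarrow> (t / 3) ^ 3 \<le> exp (t::real)"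
proof -
  assume t: "0 \<le> t"
  have "t / 3 \<le> exp (t / 3)" using exp_ge_add_one_self[of "t/3"] by linarith
  then have "(t / 3) ^ 3 \<le> exp (t / 3) ^ 3" by (rule power_mono) (use t in simp)
  also have "exp (t / 3) ^ 3 = exp (of_nat 3 * (t / 3))" by (rule exp_of_nat_mult[symmetric])
  finally show ?thesis by simp
qed

theorem lemma7:
  fixes C :: real and \<alpha> :: "nat \<Rightarrow> real" and p :: "nat \<Rightarrow> nat set \<Rightarrow> real"
  assumes C_pos: "C > 0" and C_lt1: "C < 1"
    and alpha_nonneg: "\<And>n. \<alpha> n \<ge> 0"
    and alpha_lim: "\<alpha> \<longlonglongrightarrow> 0"
    and p_prob: "\<And>n e. e \<in> Kn_edges n \<Longrightarrow> 0 \<le> p n e \<and> p n e \<le> 1"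
    and p_lower: "\<And>n e. e \<in> Kn_edges n \<Longrightarrow> (C - \<alpha> n) / real n \<le> p n e"
    and p_upper: "\<And>n e. e \<in> Kn_edges n \<Longrightarrow> p n e \<le> (C + \<alpha> n) / real n"
  shows "\<forall>\<epsilon>>0. \<exists>D>0. \<exists>N::nat. N > 0 \<and> (\<forall>n\<ge>N. \<forall>i\<in>{1..n}.
           rg_prob n (p n) (\<lambda>G. real (card (open_comp n G i)) \<ge> \<epsilon> * real n)
             \<le> D * (ln (real n))^3 / (real n)^2)"
proof (intro allI impI)
  fix \<epsilon> :: real assume \<epsilon>: "\<epsilon> > 0"
  define c' where "c' = (1 + C) / 2"
  define w where "w = 2 / (1 + c')"
  define z where "z = w / exp (c' * (w - 1))"
  have c'1: "c' < 1" "0 < c'" unfolding c'_def using C_lt1 C_pos by auto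
  have w1: "1 < w" unfolding w_def using c'1 by (simp add: field_simps)
  have wc: "w * c' < 1" unfolding w_def using c'1 by (simp add: field_simps)
  have lnw: "1 - 1 / w \<le> ln w"
  proof -
    have "ln (1 / w) \<le> 1 / w - 1" by (rule ln_le_minus_one) (use w1 in simp)
    then show ?thesis using w1 by (simp add: ln_div)
  qed
  have "c' * (w - 1) < 1 - 1 / w"
  proof -
    have "(c' * w) * (w - 1) < 1 * (w - 1)" by (rule mult_strict_right_mono) (use wc w1 in \<open>auto simp: mult.commute\<close>)
    then have "c' * (w - 1) * w < (w - 1)" by (simp add: algebra_simps)
    then have "c' * (w - 1) < (w - 1) / w" using w1 by (simp add: field_simps)
    also have "(w - 1) / w = 1 - 1 / w" using w1 by (simp add: field_simps)
    finally show ?thesis .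
  qed
  with lnw have "c' * (w - 1) < ln w" by linarith
  then have "exp (c' * (w - 1)) < w" using w1 by (metis exp_less_cancel_iff exp_ln less_trans zero_less_one)
  then have z1: "1 < z" unfolding z_def by simp
  define L where "L = ln z"
  have L0: "0 < L" unfolding L_def using z1 by simp
  define D where "D = 27 * w / (L * \<epsilon>) ^ 3"
  have D0: "0 < D" unfolding D_def using w1 L0 \<epsilon> by simp
  have "eventually (\<lambda>n. \<alpha> n < (1 - C) / 2) sequentially"
    by (rule order_tendstoD(2)[OF alpha_lim]) (use C_lt1 in simp)
  then obtain N0 where N0: "\<And>n. n \<ge> N0 \<Longrightarrow> \<alpha> n < (1 - C) / 2" by (auto simp: eventually_sequentially)
  show "\<exists>D>0. \<exists>N::nat. N > 0 \<and> (\<forall>n\<ge>N. \<forall>i\<in>{1..n}.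
           rg_prob n (p n) (\<lambda>G. real (card (open_comp n G i)) \<ge> \<epsilon> * real n)
             \<le> D * (ln (real n))^3 / (real n)^2)"
  proof (intro exI conjI allI impI ballI)
    show "0 < D" by (rule D0)
    show "0 < max N0 3" by simp
    fix n i assume n: "max N0 3 \<le> n" and i: "i \<in> {1..n}"
    have n3: "3 \<le> n" and nN0: "N0 \<le> n" using n by auto
    have npos: "0 < real n" using n3 by simp
    define q where "q = (C + \<alpha> n) / real n"
    have q0: "0 \<le> q" unfolding q_def using C_pos alpha_nonneg[of n] by simp
    have nq: "real n * q \<le> c'" unfolding q_def c'_def using N0[OF nN0] npos by simp
    have pE: "\<forall>e\<in>Kn_edges n. 0 \<le> p n e \<and> p n e \<le> 1 \<and> p n e \<le> q"
      using p_prob p_upper unfolding q_def by blast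
    have key: "z * (1 + q * (w - 1)) ^ n \<le> w"
    proof -
      have "(1 + q * (w - 1)) ^ n \<le> exp (q * (w - 1)) ^ n"
        by (rule power_mono) (use q0 w1 in simp_all)
      also have "\<dots> = exp (real n * (q * (w - 1)))" by (rule exp_of_nat_mult[symmetric])
      also have "\<dots> \<le> exp (c' * (w - 1))"
      proof -
        have "real n * (q * (w - 1)) = (real n * q) * (w - 1)" by simp
        also have "\<dots> \<le> c' * (w - 1)" by (rule mult_right_mono[OF nq]) (use w1 in simp)
        finally show ?thesis by simp
      qed
      finally have "z * (1 + q * (w - 1)) ^ n \<le> z * exp (c' * (w - 1))"
        by (rule mult_left_mono) (use z1 in simp)
      also have "\<dots> = w" unfolding z_def by simp
      finally show ?thesis .
    qed
    define X where "X G = explore n {1..n} {i} G" for G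
    have main: "Ex (Kn_edges n) (p n) (\<lambda>G. z ^ card (X G)) \<le> w ^ card ({i} \<inter> {1..n})"
      unfolding X_def
      by (rule main_bound[OF Kn_fin pE q0]) (use z1 w1 key in auto)
    have ci: "card ({i} \<inter> {1..n}) = 1" using i by simp
    define t where "t = L * (\<epsilon> * real n)"
    have t0: "0 < t" unfolding t_def using L0 \<epsilon> npos by simp
    have ind: "(if \<epsilon> * real n \<le> real (card (open_comp n G i)) then 1 else 0) \<le> (1 / exp t) * z ^ card (X G)"
      if G: "G \<subseteq> Kn_edges n" for G
    proof (cases "\<epsilon> * real n \<le> real (card (open_comp n G i))")
      case True
      have "card (open_comp n G i) \<le> card (X G)"
        unfolding X_def by (rule card_mono[OF finite_subset[OF explore_sub] oc_sub[OF G i]]) simp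
      with True have "\<epsilon> * real n \<le> real (card (X G))" by linarith
      then have "t \<le> real (card (X G)) * L" unfolding t_def using L0 by (simp add: mult.commute mult_left_mono)
      then have "exp t \<le> exp (real (card (X G)) * L)" by simp
      also have "\<dots> = z ^ card (X G)" unfolding exp_of_nat_mult L_def using z1 by simp
      finally show ?thesis using True by simp
    next
      case False
      then show ?thesis using z1 by simp
    qed
    have "rg_prob n (p n) (\<lambda>G. real (card (open_comp n G i)) \<ge> \<epsilon> * real n)
        \<le> Ex (Kn_edges n) (p n) (\<lambda>G. (1 / exp t) * z ^ card (X G))"
      unfolding rg_prob_Ex by (rule Ex_mono) (use p_prob ind in auto)
    also have "\<dots> = (1 / exp t) * Ex (Kn_edges n) (p n) (\<lambda>G. z ^ card (X G))" by (rule Ex_cmult)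
    also have "\<dots> \<le> (1 / exp t) * w" using main ci by (simp add: divide_right_mono)
    also have "\<dots> \<le> w / (t / 3) ^ 3"
    proof -
      have "(t / 3) ^ 3 \<le> exp t" by (rule exp_cube) (use t0 in simp)
      moreover have "0 < (t / 3) ^ 3" using t0 by simp
      ultimately have "1 / exp t \<le> 1 / (t / 3) ^ 3" by (simp add: frac_le)
      then have "(1 / exp t) * w \<le> (1 / (t / 3) ^ 3) * w" by (rule mult_right_mono) (use w1 in simp)
      then show ?thesis by simp
    qed
    also have "w / (t / 3) ^ 3 = D / real n ^ 3"
      unfolding D_def t_def using npos \<epsilon> L0 by (simp add: field_simps power_mult_distrib)
    also have "\<dots> \<le> D * (ln (real n)) ^ 3 / (real n) ^ 2"
    proof -
      have "1 \<le> ln (real n)"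
      proof -
        have "exp 1 \<le> real n" using exp_le n3 by linarith
        then show ?thesis using npos by (simp add: ln_ge_iff)
      qed
      then have l3: "1 \<le> ln (real n) ^ 3" by simp
      have "D / real n ^ 3 \<le> D / real n ^ 2"
        by (rule divide_left_mono) (use D0 npos n3 in \<open>auto intro!: power_increasing\<close>)
      also have "\<dots> \<le> D * ln (real n) ^ 3 / real n ^ 2"
        using l3 D0 npos by (simp add: divide_right_mono)
      finally show ?thesis .
    qed
    finally show "rg_prob n (p n) (\<lambda>G. real (card (open_comp n G i)) \<ge> \<epsilon> * real n)
             \<le> D * (ln (real n))^3 / (real n)^2" .
  qed
qed

end
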